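(* Let $U\in C([0,1])\cap C^1((0,1])\cap C^2((0,1))$ satisfy $U''>0$ on $(0,1)$, $\lim_{h\downarrow0}U'(h)=-\infty$, and $r\mapsto rU''(r)$ non-decreasing on $(0,1)$. Let $\widetilde a,a>0$ with $\widetilde a<a\le1$. Suppose that for some integer $K\ge3$ there exists $\kappa>0$ such that $D_U(\widetilde a z,\widetilde a w)=\kappa D_U(az,aw)$ for all $z,w\in\mathcal{P}_K$. Then there exist $\mu_0,\mu_1\in\mathbb{R}$ and $\lambda>0$ such that $U(r)=\lambda r\log r+\mu_1r+\mu_0$ for all $r\in(0,a]$.
   Context: $\mathcal{P}_K=\{z\in\mathbb{R}^K: z_k\ge0,\sum_kz_k=1\}$. $d_U(r,r_0)=U(r)-U(r_0)-(r-r_0)U'(r_0)$ for $r\in[0,1]$, $r_0\in(0,1]$, extended by $d_U(r,0)=\lim_{r_0\downarrow0}d_U(r,r_0)\in[0,\infty]$. For $b\in(0,1]$ and $z,w\in\mathcal{P}_K$, $D_U(bz,bw)=\sum_k d_U(bz_k,bw_k)$. *)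

theory Defs
  imports "HOL-Analysis.Analysis"
begin

definition prob_simplex :: "nat \<Rightarrow> (nat \<Rightarrow> real) set" where
  "prob_simplex K = {z. (\<forall>k<K. 0 \<le> z k) \<and> (\<Sum>k<K. z k) = 1}"

text \<open>Bregman divergence d_U(r,r0), with values in the extended reals; U' is the given
  derivative of U. For r0 = 0 it is the limit as r0 tends to 0 from the right.\<close>
definition dU :: "(real \<Rightarrow> real) \<Rightarrow> (real \<Rightarrow> real) \<Rightarrow> real \<Rightarrow> real \<Rightarrow> ereal" where
  "dU U U' r r0 =
     (if 0 < r0 then ereal (U r - U r0 - (r - r0) * U' r0)
      else Lim (at_right 0) (\<lambda>s. ereal (U r - U s - (r - s) * U' s)))"

definition DU :: "(real \<Rightarrow> real) \<Rightarrow> (real \<Rightarrow> real) \<Rightarrow> nat \<Rightarrow> real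
                   \<Rightarrow> (nat \<Rightarrow> real) \<Rightarrow> (nat \<Rightarrow> real) \<Rightarrow> ereal" where
  "DU U U' K b z w = (\<Sum>k<K. dU U U' (b * z k) (b * w k))"

end

theory Submission
  imports Defs
begin


lemma deriv_zero_of_const:
  fixes f :: "real \<Rightarrow> real"
  assumes "(f has_real_derivative D) (at x)" "x \<in> {l<..<u}" "\<And>y. y \<in> {l<..<u} \<Longrightarrow> f y = C"
  shows "D = 0"
proof -
  have "((\<lambda>_. C) has_real_derivative D) (at x)"
    by (rule has_field_derivative_transform_within_open[OF assms(1), of "{l<..<u}"]) (use assms in auto)
  then show ?thesis using DERIV_const DERIV_unique by blast
qed

lemma const_on_Ioc:
  fixes f :: "real \<Rightarrow> real"
  assumes "0<a" "continuous_on {0<..a} f" "\<And>x. 0<x \<Longrightarrow> x<a \<Longrightarrow> (f has_real_derivative 0) (at x)"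
    "0<r" "r \<le> a"
  shows "f r = f (a/2)"
proof (cases "r < a/2")
  case True
  have "f (a/2) = f r"
    by (rule DERIV_isconst_end[OF True]) (use assms in \<open>auto intro: continuous_on_subset[OF assms(2)]\<close>)
  then show ?thesis by simp
next
  case False
  show ?thesis
  proof (cases "r = a/2")
    case False
    with \<open>\<not> r < a/2\<close> have "a/2 < r" by simp
    show ?thesis
      by (rule DERIV_isconst_end[OF \<open>a/2<r\<close>]) (use assms in \<open>auto intro: continuous_on_subset[OF assms(2)]\<close>)
  next
    case True
    then show ?thesis by (simp only: True)
  qed
qed

lemma sum_split2:
  fixes f :: "nat \<Rightarrow> 'a::comm_monoid_add"
  assumes "2 \<le> K"
  shows "(\<Sum>k<K. f k) = f 0 + f 1 + (\<Sum>k\<in>{2..<K}. f k)"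
proof -
  have "{..<K} = insert 0 (insert 1 {2..<K})" using assms by auto
  then show ?thesis by (simp add: add.assoc)
qed


theorem proposition4p4:
  fixes U U' U'' :: "real \<Rightarrow> real" and a a_tilde \<kappa> :: real and K :: nat
  assumes contU: "continuous_on {0..1} U"
    and derU: "\<And>r. r \<in> {0<..1} \<Longrightarrow> (U has_real_derivative U' r) (at r within {0..1})"
    and contU': "continuous_on {0<..1} U'"
    and derU': "\<And>r. r \<in> {0<..<1} \<Longrightarrow> (U' has_real_derivative U'' r) (at r)"
    and contU'': "continuous_on {0<..<1} U''"
    and posU'': "\<And>r. r \<in> {0<..<1} \<Longrightarrow> 0 < U'' r"
    and limU': "filterlim U' at_bot (at_right 0)"
    and mono: "mono_on {0<..<1} (\<lambda>r. r * U'' r)"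
    and at_pos: "0 < a_tilde" and at_less: "a_tilde < a" and a_le: "a \<le> 1"
    and K3: "3 \<le> K"
    and kappa_pos: "0 < \<kappa>"
    and scaling: "\<And>z w. z \<in> prob_simplex K \<Longrightarrow> w \<in> prob_simplex K \<Longrightarrow>
                    DU U U' K a_tilde z w = ereal \<kappa> * DU U U' K a z w"
  shows "\<exists>\<mu>0 \<mu>1 lam. 0 < lam \<and>
           (\<forall>r \<in> {0<..a}. U r = lam * r * ln r + \<mu>1 * r + \<mu>0)"
proof -
  define aa where "aa = a_tilde"
  have at_pos': "0 < aa" "aa < a" using at_pos at_less by (auto simp: aa_def)
  have apos: "0 < a" using at_pos' by simp
  have small: "\<And>b y::real. 0 < b \<Longrightarrow> b \<le> 1 \<Longrightarrow> 0 < y \<Longrightarrow> y < 1 \<Longrightarrow> 0 < b*y \<and> b*y < 1"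
  proof -
    fix b y :: real assume "0 < b" "b \<le> 1" "0 < y" "y < 1"
    have "b*y \<le> 1*y" using mult_right_mono[of b 1 y] \<open>b \<le> 1\<close> \<open>0<y\<close> by simp
    moreover have "0 < b*y" using \<open>0<b\<close> \<open>0<y\<close> by simp
    ultimately show "0 < b*y \<and> b*y < 1" using \<open>y<1\<close> by linarith
  qed
  have dU1: "\<And>y. 0<y \<Longrightarrow> y<1 \<Longrightarrow> (U has_real_derivative U' y) (at y)"
    using derU at_within_open_subset[of _ "{0<..<1}" "{0..1::real}"] by fastforce
  define P where "P y = U (aa*y) - \<kappa> * U (a*y)" for y
  define F where "F y = aa * U' (aa*y) - \<kappa> * a * U' (a*y)" for y
  have step1: "P x + P (s-x) = 2 * P (s/2)" if xs: "0<x" "x<s" "s<1" for x s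
  proof -
    define c where "c = (1-s) / real (K-2)"
    have Kpos: "real (K-2) > 0" using K3 by simp
    have cpos: "c > 0" using xs Kpos by (simp add: c_def)
    define z where "z k = (if k = 0 then x else if k = 1 then s-x else c)" for k :: nat
    define w where "w k = (if k = 0 then s/2 else if k = 1 then s/2 else c)" for k :: nat
    have sum2: "(\<Sum>k\<in>{2..<K}. c) = 1 - s" using Kpos by (simp add: c_def)
    have zin: "z \<in> prob_simplex K"
      unfolding prob_simplex_def using xs cpos K3 sum_split2[of K z] sum2
      by (auto simp: z_def)
    have win: "w \<in> prob_simplex K"
      unfolding prob_simplex_def using xs cpos K3 sum_split2[of K w] sum2
      by (auto simp: w_def)
    have DUeq: "DU U U' K b z w = ereal (U(b*x) + U(b*(s-x)) - 2*U(b*(s/2)))" if "0<b" for b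
    proof -
      have "(\<Sum>k\<in>{2..<K}. dU U U' (b * z k) (b * w k)) = 0"
        by (rule sum.neutral) (use that cpos in \<open>auto simp: z_def w_def dU_def zero_ereal_def\<close>)
      moreover have "DU U U' K b z w = dU U U' (b * z 0) (b * w 0) + dU U U' (b * z 1) (b * w 1)
          + (\<Sum>k\<in>{2..<K}. dU U U' (b * z k) (b * w k))"
        unfolding DU_def using K3 by (subst sum_split2) auto
      moreover have "dU U U' (b * z 0) (b * w 0) + dU U U' (b * z 1) (b * w 1)
          = ereal (U(b*x) + U(b*(s-x)) - 2*U(b*(s/2)))"
        using that xs by (simp add: z_def w_def dU_def algebra_simps)
      ultimately show ?thesis by simp
    qed
    have "ereal (U(aa*x) + U(aa*(s-x)) - 2*U(aa*(s/2)))
        = ereal (\<kappa> * (U(a*x) + U(a*(s-x)) - 2*U(a*(s/2))))"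
      using scaling[OF zin win] DUeq[of aa] DUeq[of a] at_pos' by (simp add: aa_def)
    then show ?thesis by (simp add: P_def algebra_simps)
  qed
  have aa1: "aa \<le> 1" "a \<le> 1" using at_pos' a_le by auto
  have dP: "(P has_real_derivative F y) (at y)" if "0<y" "y<1" for y
  proof -
    have 1: "((\<lambda>y. U(aa*y)) has_real_derivative U'(aa*y)*aa) (at y)"
      by (rule DERIV_chain2[OF dU1]) (use small[of aa y] that at_pos' aa1 in \<open>auto intro!: derivative_eq_intros\<close>)
    have 2: "((\<lambda>y. U(a*y)) has_real_derivative U'(a*y)*a) (at y)"
      by (rule DERIV_chain2[OF dU1]) (use small[of a y] that at_pos' aa1 in \<open>auto intro!: derivative_eq_intros\<close>)
    have "(P has_real_derivative U'(aa*y)*aa - \<kappa> * (U'(a*y)*a)) (at y)"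
      unfolding P_def by (intro DERIV_diff DERIV_cmult 1 2)
    then show ?thesis by (simp add: F_def algebra_simps)
  qed
  have step2: "F x = F (s-x)" if xs: "0<x" "x<s" "s<1" for x s
  proof -
    have d1: "((\<lambda>y. P (s-y)) has_real_derivative F (s-x) * (-1)) (at x)"
      by (rule DERIV_chain2[OF dP]) (use xs in \<open>auto intro!: derivative_eq_intros\<close>)
    have "((\<lambda>y. P y + P (s-y)) has_real_derivative F x + F (s-x) * (-1)) (at x)"
      by (intro DERIV_add dP d1) (use xs in auto)
    then have "F x + F (s-x) * (-1) = 0"
      by (rule deriv_zero_of_const[where l=0 and u=s and C="2 * P (s/2)"]) (use xs step1 in auto)
    then show ?thesis by simp
  qed
  define cF where "cF = F (1/2)"
  have Fconst: "F u = cF" if "0<u" "u<1" for u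
  proof -
    define x where "x = min (1-u) (1/2) / 2"
    have x: "0 < x" "x < 1-u" "x < 1/2" using that by (auto simp: x_def)
    have "F x = F ((x+u) - x)" by (rule step2) (use x that in auto)
    moreover have "F x = F ((x+1/2) - x)" by (rule step2) (use x that in auto)
    ultimately show ?thesis by (simp add: cF_def)
  qed
  have step4: "aa * (U''(aa*y)*aa) = \<kappa> * a * (U''(a*y)*a)" if "0<y" "y<1" for y
  proof -
    have 1: "((\<lambda>y. U'(aa*y)) has_real_derivative U''(aa*y)*aa) (at y)"
      by (rule DERIV_chain2[OF derU']) (use small[of aa y] that at_pos' aa1 in \<open>auto intro!: derivative_eq_intros\<close>)
    have 2: "((\<lambda>y. U'(a*y)) has_real_derivative U''(a*y)*a) (at y)"
      by (rule DERIV_chain2[OF derU']) (use small[of a y] that at_pos' aa1 in \<open>auto intro!: derivative_eq_intros\<close>)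
    have "(F has_real_derivative aa * (U''(aa*y)*aa) - \<kappa> * a * (U''(a*y)*a)) (at y)"
      unfolding F_def by (intro DERIV_diff DERIV_cmult 1 2)
    then have "aa * (U''(aa*y)*aa) - \<kappa> * a * (U''(a*y)*a) = 0"
      by (rule deriv_zero_of_const[where l=0 and u=1 and C=cF]) (use that Fconst in auto)
    then show ?thesis by simp
  qed
  define \<rho> where "\<rho> = aa / a"
  define q where "q = \<kappa> * a / aa"
  define \<phi> where "\<phi> r = r * U'' r" for r
  have rho: "0 < \<rho>" "\<rho> < 1" using at_pos' by (auto simp: \<rho>_def)
  have qpos: "0 < q" using at_pos' kappa_pos by (simp add: q_def)
  have step5: "\<phi> (\<rho>*t) = q * \<phi> t \<and> U' (\<rho>*t) = q * U' t + cF / aa" if "0<t" "t<a" for t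
  proof -
    define y where "y = t / a"
    have y: "0 < y" "y < 1" "aa * y = \<rho> * t" "a * y = t" using that apos by (auto simp: y_def \<rho>_def)
    have e1: "aa * (U''(\<rho>*t)*aa) = \<kappa> * a * (U''(t)*a)" using step4[OF y(1,2)] y by simp
    have e2: "aa * U' (\<rho>*t) - \<kappa> * a * U' t = cF" using Fconst[OF y(1,2)] y by (simp add: F_def)
    have "\<phi> (\<rho>*t) = q * \<phi> t"
    proof -
      have "\<phi> (\<rho>*t) = (t/(a*aa)) * (aa * (U''(\<rho>*t)*aa))"
        using at_pos' apos by (simp add: \<phi>_def \<rho>_def field_simps)
      also have "\<dots> = (t/(a*aa)) * (\<kappa> * a * (U''(t)*a))" by (simp only: e1)
      also have "\<dots> = q * \<phi> t" using at_pos' apos by (simp add: \<phi>_def q_def field_simps)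
      finally show ?thesis .
    qed
    moreover have "U' (\<rho>*t) = q * U' t + cF / aa"
      using e2 at_pos' by (simp add: q_def field_simps)
    ultimately show ?thesis by simp
  qed
  define t0 where "t0 = a/2"
  have t0: "0 < t0" "t0 < a" "t0 < 1" using apos a_le by (auto simp: t0_def)
  have in01: "r \<in> {0<..<1}" if "0<r" "r<a" for r using that a_le by auto
  have phipos: "0 < \<phi> r" if "0<r" "r<a" for r
    using posU''[OF in01[OF that]] that by (simp add: \<phi>_def)
  have q1: "q \<le> 1"
  proof -
    have "\<rho>*t0 \<le> t0" using rho t0 by simp
    moreover have "0 < \<rho>*t0" using rho t0 by simp
    ultimately have "\<phi> (\<rho>*t0) \<le> \<phi> t0"
      using mono_onD[OF mono, of "\<rho>*t0" t0] t0 unfolding \<phi>_def by auto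
    then have "q * \<phi> t0 \<le> 1 * \<phi> t0" using step5[OF t0(1,2)] by simp
    then show ?thesis using phipos[OF t0(1,2)] by (simp only: mult_le_cancel_right)
  qed
  have powin: "0 < \<rho>^n*t \<and> \<rho>^n*t < a" if "0<t" "t<a" for n t
  proof -
    have "\<rho>^n \<le> 1" using rho by (simp add: power_le_one)
    then have "\<rho>^n*t \<le> 1*t" using that by (intro mult_right_mono) auto
    moreover have "0 < \<rho>^n*t" using that rho by simp
    ultimately show ?thesis using that by linarith
  qed
  have qeq: "q = 1"
  proof (rule ccontr)
    assume "q \<noteq> 1"
    with q1 have qlt: "q < 1" by simp
    define V where "V n = U' (\<rho>^n*t0)" for n
    define W where "W n = V n - V (Suc n)" for n
    have VS: "V (Suc n) = q * V n + cF/aa" for n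
      using step5[of "\<rho>^n*t0"] powin[OF t0(1,2), of n] by (simp add: V_def mult.assoc)
    have Wn: "W n = q^n * W 0" for n
    proof (induction n)
      case (Suc n)
      have "W (Suc n) = q * W n" unfolding W_def using VS[of n] VS[of "Suc n"] by (simp add: algebra_simps)
      then show ?case using Suc by simp
    qed simp
    have bound: "V N \<ge> V 0 - \<bar>W 0\<bar> / (1-q)" for N
    proof -
      have "V 0 - V N = (\<Sum>n<N. W n)" unfolding W_def by (rule sum_lessThan_telescope'[symmetric])
      also have "\<dots> = (\<Sum>n<N. W 0 * q^n)" by (intro sum.cong refl) (metis Wn mult.commute)
      also have "\<dots> = W 0 * (\<Sum>n<N. q^n)" by (simp only: sum_distrib_left)
      also have "\<dots> = W 0 * ((1 - q^N) / (1-q))" using qlt by (simp add: sum_gp_strict)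
      also have "\<dots> \<le> \<bar>W 0\<bar> * ((1 - q^N) / (1-q))"
        using qlt qpos by (intro mult_right_mono) (auto simp: power_le_one)
      also have "\<dots> \<le> \<bar>W 0\<bar> * (1 / (1-q))"
        using qlt qpos by (intro mult_left_mono divide_right_mono) auto
      finally show ?thesis by simp
    qed
    have "((\<lambda>n. \<rho>^n*t0) \<longlongrightarrow> 0 * t0) sequentially"
      using rho by (intro tendsto_mult LIMSEQ_power_zero tendsto_const) auto
    then have "filterlim (\<lambda>n. \<rho>^n*t0) (at_right 0) sequentially"
      using rho t0 by (intro tendsto_imp_filterlim_at_right) auto
    then have "filterlim V at_bot sequentially"
      unfolding V_def by (rule filterlim_compose[OF limU'])
    then have "eventually (\<lambda>n. V n \<le> V 0 - \<bar>W 0\<bar> / (1-q) - 1) sequentially"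
      by (simp add: filterlim_at_bot)
    then obtain N where "V N \<le> V 0 - \<bar>W 0\<bar> / (1-q) - 1" by (auto simp: eventually_sequentially)
    with bound[of N] show False by simp
  qed
  have phin: "\<phi> (\<rho>^n*t) = \<phi> t" if "0<t" "t<a" for n t
  proof (induction n)
    case (Suc n)
    have "\<phi> (\<rho>^Suc n*t) = \<phi> (\<rho>*(\<rho>^n*t))" by (simp add: mult.assoc)
    also have "\<dots> = \<phi> (\<rho>^n*t)" using step5[of "\<rho>^n*t"] powin[OF that, of n] qeq by simp
    finally show ?case using Suc by simp
  qed simp
  have phieq: "\<phi> s = \<phi> t" if st: "0<s" "s\<le>t" "t<a" for s t
  proof -
    have "0 < s/t" using st by simp
    then obtain n where n: "\<rho>^n < s/t" using real_arch_pow_inv[of "s/t" \<rho>] rho by blast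
    have lt: "\<rho>^n*t < s" using n st by (simp add: field_simps)
    have tpos: "0 < t" using st by linarith
    have pw: "0 < \<rho>^n*t \<and> \<rho>^n*t < a" by (rule powin[OF tpos st(3)])
    have m1: "\<rho>^n*t \<in> {0<..<1}" using pw a_le by auto
    have m2: "s \<in> {0<..<1}" using st a_le by auto
    have m3: "t \<in> {0<..<1}" using st a_le by auto
    have "\<phi> (\<rho>^n*t) \<le> \<phi> s"
      using mono_onD[OF mono m1 m2] lt unfolding \<phi>_def by simp
    moreover have "\<phi> s \<le> \<phi> t"
      using mono_onD[OF mono m2 m3] st unfolding \<phi>_def by simp
    moreover have "\<phi> (\<rho>^n*t) = \<phi> t" by (rule phin[OF tpos st(3)])
    ultimately show ?thesis by simp
  qed
  define lam where "lam = \<phi> t0"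
  have lampos: "0 < lam" using phipos[OF t0(1,2)] by (simp add: lam_def)
  have phil: "\<phi> r = lam" if r: "0<r" "r<a" for r
  proof (cases "r \<le> t0")
    case True
    then show ?thesis using phieq[OF r(1) True t0(2)] by (simp add: lam_def)
  next
    case False
    then have "t0 \<le> r" by simp
    then show ?thesis using phieq[OF t0(1) _ r(2)] by (simp add: lam_def)
  qed
  have U''eq: "U'' r = lam / r" if "0<r" "r<a" for r
    using phil[OF that] that by (simp add: \<phi>_def field_simps)
  define H where "H r = U' r - lam * ln r" for r
  have Hc: "H r = H (a/2)" if "0<r" "r\<le>a" for r
  proof (rule const_on_Ioc[OF apos _ _ that])
    show "continuous_on {0<..a} H" unfolding H_def
      using a_le by (intro continuous_intros continuous_on_subset[OF contU']) auto
    fix x assume x: "0<x" "x<a"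
    have "(H has_real_derivative U'' x - lam / x) (at x)"
      unfolding H_def using derU'[OF in01[OF x]] x by (auto intro!: derivative_eq_intros)
    then show "(H has_real_derivative 0) (at x)" using U''eq[OF x] x by (simp add: field_simps)
  qed
  define m where "m = H (a/2)"
  define G where "G r = U r - lam * r * ln r - (m - lam) * r" for r
  have Gc: "G r = G (a/2)" if "0<r" "r\<le>a" for r
  proof (rule const_on_Ioc[OF apos _ _ that])
    show "continuous_on {0<..a} G" unfolding G_def
      using a_le by (intro continuous_intros continuous_on_subset[OF contU]) auto
    fix x assume x: "0<x" "x<a"
    have "(G has_real_derivative U' x - (lam * 1 * ln x + lam * x * inverse x) - (m - lam) * 1) (at x)"
      unfolding G_def using dU1[of x] x a_le by (auto intro!: derivative_eq_intros)
    moreover have "U' x - lam * ln x = m" using Hc[of x] x by (simp add: H_def m_def)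
    ultimately show "(G has_real_derivative 0) (at x)" using x by (simp add: field_simps)
  qed
  show ?thesis
  proof (intro exI conjI ballI)
    show "0 < lam" by (rule lampos)
    fix r assume "r \<in> {0<..a}"
    then show "U r = lam * r * ln r + (m - lam) * r + G (a/2)"
      using Gc[of r] by (simp add: G_def)
  qed
qed

end
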